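(* Let $N\ge 1$ and $M\ge 1$ be integers. There exists a finite set of $M$-mode linear optical interferometer configurations $g_1,\dots,g_R\in \mathrm{U}(M)$ with $$R<\binom{N+M^2-1}{N}^2$$ such that every $N$-photon, $M$-mode state $\rho$ can be reconstructed from the photon-counting outcome probabilities $p_{\nu,g_j}=\langle \nu|U(g_j)^\dagger\rho\, U(g_j)|\nu\rangle$, $j=1,\dots,R$, $\nu$ ranging over all $M$-mode Fock states with $N$ photons; i.e. these probabilities determine $\rho$ uniquely.
   Context: Let $a_1,\dots,a_M$ be bosonic annihilation operators of $M$ optical modes. An $N$-photon, $M$-mode state is a density operator $\rho$ on the space $\mathcal H_{N,M}$ spanned by the Fock states $|\nu\rangle=|k_1,\dots,k_M\rangle$ with $k_j\ge 0$ and $\sum_j k_j=N$; $\dim\mathcal H_{N,M}=\binom{N+M-1}{N}$. A configuration of an $M$-mode linear optical interferometer (beam splitters and phase shifters) is a unitary $g=e^{iH}\in\mathrm U(M)$, $H$ an $M\times M$ Hermitian matrix, acting on the Fock space via $U(g)=\exp\!\big(i\sum_{k,l}H_{kl}a_k^\dagger a_l\big)$. Photon counting after configuration $g$ yields outcome $\nu$ (a Fock state with $N$ photons) with probability $p_{\nu,g}=\langle\nu|U(g)^\dagger\rho\,U(g)|\nu\rangle$. Reconstruction with configurations $g_1,\dots,g_R$ means the map $\rho\mapsto(p_{\nu,g_j})_{\nu,j}$ is injective (equivalently, the associated linear system has a unique solution $\rho$). *)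

theory Defs
  imports Complex_Main "HOL-Library.FuncSet"
begin

text \<open>Modes are indexed by 0..<M. An M-mode Fock state with N photons is an
occupation function k :: nat => nat, zero outside 0..<M, with total N.\<close>

definition fock :: "nat \<Rightarrow> nat \<Rightarrow> (nat \<Rightarrow> nat) set" where
  "fock N M = {k. (\<forall>j\<ge>M. k j = 0) \<and> (\<Sum>j<M. k j) = N}"

definition unitary_mat :: "nat \<Rightarrow> (nat \<Rightarrow> nat \<Rightarrow> complex) \<Rightarrow> bool" where
  "unitary_mat M g \<longleftrightarrow>
     (\<forall>i<M. \<forall>j<M. (\<Sum>k<M. cnj (g k i) * g k j) = (if i = j then 1 else 0))"

definition fock_fact :: "nat \<Rightarrow> (nat \<Rightarrow> nat) \<Rightarrow> real" where
  "fock_fact M k = (\<Prod>l<M. fact (k l))"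

definition mode_list :: "nat \<Rightarrow> (nat \<Rightarrow> nat) \<Rightarrow> nat list" where
  "mode_list M k = concat (map (\<lambda>l. replicate (k l) l) [0..<M])"

definition occ :: "nat \<Rightarrow> (nat \<Rightarrow> nat) \<Rightarrow> (nat \<Rightarrow> nat)" where
  "occ N f = (\<lambda>k. card {j\<in>{0..<N}. f j = k})"

text \<open>Matrix element <mu| U(g) |nu> of the Fock-space unitary
  U(g) = exp(i sum_{k,l} H_{kl} a_k^dagger a_l), g = exp(i H).
  It is characterised by U(g) a_l^dagger U(g)^dagger = sum_k g_{kl} a_k^dagger,
  U(g)|0> = |0>, so
  U(g)|nu> = (nu!)^(-1/2) prod_l (sum_k g_{kl} a_k^dagger)^(nu_l) |0>;
  expanding the product over the N photons (photon j sits in mode c_j) gives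
  the formula below, using (a^dagger)^{mu}|0> = sqrt(mu!) |mu>.\<close>

definition fock_amp :: "nat \<Rightarrow> nat \<Rightarrow> (nat \<Rightarrow> nat \<Rightarrow> complex) \<Rightarrow> (nat \<Rightarrow> nat) \<Rightarrow> (nat \<Rightarrow> nat) \<Rightarrow> complex" where
  "fock_amp N M g mu nu =
     complex_of_real (sqrt (fock_fact M mu) / sqrt (fock_fact M nu)) *
     (\<Sum>f\<in>{f\<in>{0..<N} \<rightarrow>\<^sub>E {0..<M}. occ N f = mu}.
        \<Prod>j<N. g (f j) (mode_list M nu ! j))"

definition density_op :: "nat \<Rightarrow> nat \<Rightarrow> ((nat \<Rightarrow> nat) \<Rightarrow> (nat \<Rightarrow> nat) \<Rightarrow> complex) \<Rightarrow> bool" where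
  "density_op N M \<rho> \<longleftrightarrow>
     (\<forall>mu mu'. (mu \<notin> fock N M \<or> mu' \<notin> fock N M) \<longrightarrow> \<rho> mu mu' = 0) \<and>
     (\<forall>mu mu'. \<rho> mu' mu = cnj (\<rho> mu mu')) \<and>
     (\<forall>v :: (nat \<Rightarrow> nat) \<Rightarrow> complex.
        0 \<le> Re (\<Sum>mu\<in>fock N M. \<Sum>mu'\<in>fock N M. cnj (v mu) * \<rho> mu mu' * v mu')) \<and>
     (\<Sum>mu\<in>fock N M. \<rho> mu mu) = 1"

definition outcome_prob :: "nat \<Rightarrow> nat \<Rightarrow> ((nat \<Rightarrow> nat) \<Rightarrow> (nat \<Rightarrow> nat) \<Rightarrow> complex) \<Rightarrow> (nat \<Rightarrow> nat \<Rightarrow> complex) \<Rightarrow> (nat \<Rightarrow> nat) \<Rightarrow> complex" where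
  "outcome_prob N M \<rho> g nu =
     (\<Sum>mu\<in>fock N M. \<Sum>mu'\<in>fock N M.
        cnj (fock_amp N M g mu nu) * \<rho> mu mu' * fock_amp N M g mu' nu)"

definition reconstructs :: "nat \<Rightarrow> nat \<Rightarrow> (nat \<Rightarrow> nat \<Rightarrow> complex) list \<Rightarrow> bool" where
  "reconstructs N M gs \<longleftrightarrow>
     (\<forall>\<rho>1 \<rho>2. density_op N M \<rho>1 \<longrightarrow> density_op N M \<rho>2 \<longrightarrow>
        (\<forall>j<length gs. \<forall>nu\<in>fock N M. outcome_prob N M \<rho>1 (gs ! j) nu = outcome_prob N M \<rho>2 (gs ! j) nu) \<longrightarrow>
        \<rho>1 = \<rho>2)"

end

theory Submission
  imports Defs "HOL-Library.Function_Algebras"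
begin



lemma poly_infinite_zero:
  fixes C :: "'k \<Rightarrow> complex" and e :: "'k \<Rightarrow> nat"
  assumes fin: "finite I" and inf: "infinite X"
    and z: "\<forall>x\<in>X. (\<Sum>k\<in>I. C k * x ^ e k) = 0"
  shows "(\<Sum>k\<in>{k\<in>I. e k = m}. C k) = 0"
proof -
  define n where "n = (\<Sum>k\<in>I. e k)"
  have en: "e k \<le> n" if "k \<in> I" for k
    unfolding n_def using fin that by (intro member_le_sum) auto
  define c where "c i = (\<Sum>k\<in>{k\<in>I. e k = i}. C k)" for i
  have eq: "(\<Sum>k\<in>I. C k * x ^ e k) = (\<Sum>i\<le>n. c i * x ^ i)" for x
  proof -
    have "(\<Sum>k\<in>I. C k * x ^ e k) = (\<Sum>i\<le>n. \<Sum>k\<in>{k\<in>I. e k = i}. C k * x ^ e k)"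
      using en by (intro sum.group[symmetric] fin) auto
    also have "\<dots> = (\<Sum>i\<le>n. c i * x ^ i)"
      unfolding c_def by (intro sum.cong refl) (auto simp: sum_distrib_right)
    finally show ?thesis .
  qed
  show ?thesis
  proof (cases "m \<le> n")
    case True
    show ?thesis
    proof (rule ccontr)
      assume "(\<Sum>k\<in>{k\<in>I. e k = m}. C k) \<noteq> 0"
      then have "c m \<noteq> 0" by (simp add: c_def)
      then have "finite {x. (\<Sum>i\<le>n. c i * x ^ i) = 0}"
        using True by (intro polyfun_roots_finite) auto
      moreover have "X \<subseteq> {x. (\<Sum>i\<le>n. c i * x ^ i) = 0}" using z eq by auto
      ultimately show False using inf finite_subset by blast
    qed
  next
    case False
    then have "{k\<in>I. e k = m} = {}" using en by fastforce
    then show ?thesis by (simp only: sum.empty)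
  qed
qed

lemma circle_infinite: "infinite {w::complex. cmod w = 1}"
proof
  assume "finite {w::complex. cmod w = 1}"
  then have fin: "finite (Re ` {w::complex. cmod w = 1})" by simp
  have sub: "{-1..1::real} \<subseteq> Re ` {w::complex. cmod w = 1}"
  proof
    fix a :: real assume a: "a \<in> {-1..1}"
    then have "a^2 \<le> 1" by (simp add: abs_square_le_1 abs_le_iff)
    then have "cmod (Complex a (sqrt (1 - a^2))) = 1"
      by (simp add: cmod_def)
    then show "a \<in> Re ` {w::complex. cmod w = 1}" by (intro image_eqI[of _ _ "Complex a (sqrt (1 - a^2))"]) auto
  qed
  have "infinite {-1..1::real}" by (rule infinite_Icc) simp
  then show False using finite_subset[OF sub fin] by blast
qed

lemma pos_infinite: "infinite (complex_of_real ` {0<..})"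
proof
  assume "finite (complex_of_real ` {0<..})"
  moreover have "inj_on complex_of_real {0<..}" by (auto simp: inj_on_def)
  ultimately have "finite {0::real<..}" using finite_imageD by blast
  moreover have "{1..2::real} \<subseteq> {0<..}" by auto
  ultimately show False using infinite_Icc[of "1::real" 2] finite_subset by (metis one_less_numeral_iff semiring_norm(76))
qed

lemma onevar:
  fixes C :: "'k \<Rightarrow> complex" and i j :: "'k \<Rightarrow> nat"
  assumes fin: "finite I" and inj: "inj_on (\<lambda>k. (i k, j k)) I"
    and z: "\<forall>z. z \<noteq> 0 \<longrightarrow> (\<Sum>k\<in>I. C k * cnj z ^ i k * z ^ j k) = 0"
  shows "\<forall>k\<in>I. C k = 0"
proof
  fix k0 assume k0: "k0 \<in> I"
  define n where "n = (\<Sum>k\<in>I. i k)"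
  have inl: "i k \<le> n" if "k \<in> I" for k
    unfolding n_def using fin that by (intro member_le_sum) auto
  define e where "e k = n - i k + j k" for k
  have step1: "(\<Sum>k\<in>{k\<in>I. e k = m}. C k * complex_of_real r ^ (i k + j k)) = 0" if r: "r > 0" for r m
  proof (rule poly_infinite_zero[OF fin circle_infinite])
    show "\<forall>x\<in>{w. cmod w = 1}. (\<Sum>k\<in>I. C k * complex_of_real r ^ (i k + j k) * x ^ e k) = 0"
    proof
      fix w :: complex assume "w \<in> {w. cmod w = 1}"
      then have w: "cmod w = 1" by simp
      have wc: "w * cnj w = 1" by (simp only: complex_norm_square[symmetric] w) simp
      have "r * w \<noteq> 0" using r w by auto
      then have "(\<Sum>k\<in>I. C k * cnj (r * w) ^ i k * (r * w) ^ j k) = 0" by (rule z[rule_format])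
      then have "w ^ n * (\<Sum>k\<in>I. C k * cnj (r * w) ^ i k * (r * w) ^ j k) = 0" by simp
      moreover have kk: "w ^ n * (C k * cnj (r * w) ^ i k * (r * w) ^ j k) = C k * complex_of_real r ^ (i k + j k) * w ^ e k"
        if "k \<in> I" for k
      proof -
        have n: "w ^ n = w ^ (n - i k) * w ^ i k" using inl[OF that] by (simp add: power_add[symmetric])
        have "w ^ n * (C k * cnj (r * w) ^ i k * (r * w) ^ j k)
           = C k * r ^ (i k + j k) * w ^ (n - i k) * (w * cnj w) ^ i k * w ^ j k"
          unfolding n by (simp add: power_add power_mult_distrib mult_ac)
        also have "\<dots> = C k * complex_of_real r ^ (i k + j k) * w ^ e k"
          by (simp add: wc e_def power_add)
        finally show ?thesis .
      qed
      moreover have "(\<Sum>k\<in>I. C k * complex_of_real r ^ (i k + j k) * w ^ e k)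
          = w ^ n * (\<Sum>k\<in>I. C k * cnj (r * w) ^ i k * (r * w) ^ j k)"
        unfolding sum_distrib_left by (rule sum.cong[OF refl]) (simp only: kk)
      ultimately show "(\<Sum>k\<in>I. C k * complex_of_real r ^ (i k + j k) * w ^ e k) = 0"
        by simp
    qed
  qed
  define m where "m = e k0"
  define s where "s = i k0 + j k0"
  have "(\<Sum>k\<in>{k\<in>{k\<in>I. e k = m}. i k + j k = s}. C k) = 0"
  proof (rule poly_infinite_zero[OF _ pos_infinite])
    show "finite {k\<in>I. e k = m}" using fin by simp
    show "\<forall>x\<in>complex_of_real ` {0<..}. (\<Sum>k\<in>{k\<in>I. e k = m}. C k * x ^ (i k + j k)) = 0"
      using step1 by auto
  qed
  moreover have S: "{k\<in>{k\<in>I. e k = m}. i k + j k = s} = {k0}"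
  proof -
    have "k = k0" if "k \<in> I" "e k = m" "i k + j k = s" for k
    proof -
      have e1: "n - i k + j k = n - i k0 + j k0" using that(2) by (simp add: m_def e_def)
      have "i k = i k0 \<and> j k = j k0" using e1 that(3) inl[OF that(1)] inl[OF k0]
        unfolding s_def by linarith
      then show ?thesis using inj that(1) k0 by (auto simp: inj_on_def)
    qed
    then show ?thesis using k0 by (auto simp: m_def s_def)
  qed
  ultimately show "C k0 = 0" by simp
qed




lemma digits_inj:
  fixes B :: nat
  shows "(\<forall>l. mu l < B) \<Longrightarrow> (\<forall>l. mu' l < B) \<Longrightarrow>
    (\<Sum>l<M. mu l * B ^ l) = (\<Sum>l<M. mu' l * B ^ l) \<Longrightarrow> \<forall>l<M. mu l = mu' l"
proof (induction M arbitrary: mu mu')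
  case 0
  then show ?case by simp
next
  case (Suc M)
  have "mu 0 < B" using Suc.prems(1) by blast
  then have Bpos: "B > 0" by simp
  have split: "(\<Sum>l<Suc M. f l * B ^ l) = f 0 + B * (\<Sum>l<M. f (Suc l) * B ^ l)" for f :: "nat \<Rightarrow> nat"
    unfolding sum.lessThan_Suc_shift by (simp add: sum_distrib_left mult_ac del: sum.lessThan_Suc)
  have eq: "mu 0 + B * (\<Sum>l<M. mu (Suc l) * B ^ l) = mu' 0 + B * (\<Sum>l<M. mu' (Suc l) * B ^ l)"
    using Suc.prems(3) unfolding split .
  have m0: "mu 0 = mu' 0"
  proof -
    have "(mu 0 + B * (\<Sum>l<M. mu (Suc l) * B ^ l)) mod B = mu 0" using Suc.prems(1) by simp
    moreover have "(mu' 0 + B * (\<Sum>l<M. mu' (Suc l) * B ^ l)) mod B = mu' 0" using Suc.prems(2) by simp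
    ultimately show ?thesis using eq by simp
  qed
  then have "B * (\<Sum>l<M. mu (Suc l) * B ^ l) = B * (\<Sum>l<M. mu' (Suc l) * B ^ l)" using eq by simp
  then have se: "(\<Sum>l<M. mu (Suc l) * B ^ l) = (\<Sum>l<M. mu' (Suc l) * B ^ l)" using Bpos by simp
  have p1: "\<forall>l. mu (Suc l) < B" using Suc.prems(1) by blast
  have p2: "\<forall>l. mu' (Suc l) < B" using Suc.prems(2) by blast
  have IH: "\<forall>l<M. mu (Suc l) = mu' (Suc l)"
    by (rule Suc.IH[of "\<lambda>l. mu (Suc l)" "\<lambda>l. mu' (Suc l)", OF p1 p2 se])
  show ?case
  proof (intro allI impI)
    fix l assume "l < Suc M"
    then show "mu l = mu' l" using m0 IH by (cases l) auto
  qed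
qed

lemma fock_le: "mu \<in> fock N M \<Longrightarrow> mu l \<le> N"
proof -
  assume a: "mu \<in> fock N M"
  show ?thesis
  proof (cases "l < M")
    case True
    then have "mu l \<le> (\<Sum>j<M. mu j)" by (intro member_le_sum) auto
    then show ?thesis using a by (simp add: fock_def)
  next
    case False
    then show ?thesis using a by (simp add: fock_def)
  qed
qed

lemma fock_card: "card (fock N K) = (N + K - 1) choose N"
proof -
  let ?L = "{l::nat list. size l = K \<and> sum_list l = N}"
  let ?h = "\<lambda>mu::nat\<Rightarrow>nat. map mu [0..<K]"
  have inj: "inj_on ?h (fock N K)"
  proof (rule inj_onI)
    fix x y assume x: "x \<in> fock N K" and y: "y \<in> fock N K" and e: "?h x = ?h y"
    show "x = y"
    proof
      fix l show "x l = y l"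
      proof (cases "l < K")
        case True
        then have "?h x ! l = ?h y ! l" using e by simp
        then show ?thesis using True by simp
      next
        case False then show ?thesis using x y by (simp add: fock_def)
      qed
    qed
  qed
  have im: "?h ` fock N K = ?L"
  proof
    show "?h ` fock N K \<subseteq> ?L"
    proof
      fix l assume "l \<in> ?h ` fock N K"
      then obtain mu where mu: "mu \<in> fock N K" and l: "l = ?h mu" by blast
      have "sum_list (map mu [0..<K]) = (\<Sum>j<K. mu j)"
        by (simp add: interv_sum_list_conv_sum_set_nat lessThan_atLeast0)
      then show "l \<in> ?L" using mu l by (simp add: fock_def)
    qed
    show "?L \<subseteq> ?h ` fock N K"
    proof
      fix l assume l: "l \<in> ?L"
      define mu where "mu = (\<lambda>i. if i < K then l ! i else 0)"
      have hm: "?h mu = l" using l by (intro nth_equalityI) (auto simp: mu_def)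
      have "(\<Sum>j<K. mu j) = sum_list (map mu [0..<K])"
        by (simp add: interv_sum_list_conv_sum_set_nat lessThan_atLeast0)
      then have "mu \<in> fock N K" using hm l by (simp add: fock_def mu_def)
      then show "l \<in> ?h ` fock N K" using hm by blast
    qed
  qed
  have "card (fock N K) = card ?L" using card_image[OF inj] im by simp
  then show ?thesis by (simp add: card_length_sum_list)
qed

lemma fock_finite: "K \<ge> 1 \<Longrightarrow> finite (fock N K)"
proof -
  assume "K \<ge> 1"
  then have "card (fock N K) > 0" by (simp add: fock_card)
  then show ?thesis using card_gt_0_iff by blast
qed

lemma fock_card_less:
  assumes "M \<ge> 2" and "N \<ge> 1"
  shows "card (fock N M) < (N + M^2 - 1) choose N"
proof -
  have M2: "M < M^2" using assms by (simp add: power2_eq_square)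
  have sub: "fock N M \<subseteq> fock N (M^2)"
  proof
    fix mu assume mu: "mu \<in> fock N M"
    have "(\<Sum>j<M^2. mu j) = (\<Sum>j<M. mu j)"
      using mu M2 by (intro sum.mono_neutral_right) (auto simp: fock_def)
    then show "mu \<in> fock N (M^2)" using mu M2 by (simp add: fock_def)
  qed
  define e where "e = (\<lambda>l. if l = M then N else 0::nat)"
  have "e \<in> fock N (M^2)" using M2 by (auto simp: fock_def e_def)
  moreover have "e \<notin> fock N M"
  proof
    assume "e \<in> fock N M"
    moreover have "(\<Sum>j<M. e j) = 0" by (simp add: e_def)
    ultimately have "N = 0" by (simp add: fock_def)
    moreover have "e M = 0" using \<open>e \<in> fock N M\<close> by (simp add: fock_def)
    ultimately show False using assms(2) by simp
  qed
  ultimately have "fock N M \<subset> fock N (M^2)" using sub by blast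
  moreover have "finite (fock N (M^2))" using M2 by (intro fock_finite) simp
  ultimately have "card (fock N M) < card (fock N (M^2))" by (rule psubset_card_mono[rotated])
  then show ?thesis by (simp add: fock_card)
qed




definition e0 :: "nat \<Rightarrow> nat \<Rightarrow> nat" where "e0 N = (\<lambda>l. if l = 0 then N else 0)"

definition Sm :: "nat \<Rightarrow> nat \<Rightarrow> (nat \<Rightarrow> nat) \<Rightarrow> (nat \<Rightarrow> nat) set" where
  "Sm N M mu = {f\<in>{0..<N} \<rightarrow>\<^sub>E {0..<M}. occ N f = mu}"

definition Kc :: "nat \<Rightarrow> nat \<Rightarrow> (nat \<Rightarrow> nat) \<Rightarrow> complex" where
  "Kc N M mu = complex_of_real (sqrt (fock_fact M mu) / sqrt (fact N) * real (card (Sm N M mu)))"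

lemma e0_fock: "M \<ge> 1 \<Longrightarrow> e0 N \<in> fock N M"
  by (auto simp: fock_def e0_def)

lemma mode_list_e0: assumes "M \<ge> 1" shows "mode_list M (e0 N) = replicate N 0"
proof -
  have up: "[0..<M] = 0 # [1..<M]" using assms by (simp add: upt_conv_Cons)
  have "map (\<lambda>l. replicate (e0 N l) l) [1..<M] = map (\<lambda>l. []) [1..<M]"
    by (rule map_cong) (auto simp: e0_def)
  then show ?thesis unfolding mode_list_def up by (simp add: e0_def)
qed

lemma fock_fact_e0: assumes "M \<ge> 1" shows "fock_fact M (e0 N) = fact N"
proof -
  have "fock_fact M (e0 N) = (\<Prod>l<M. if l = 0 then fact N else 1)"
    unfolding fock_fact_def by (rule prod.cong) (auto simp: e0_def)
  also have "\<dots> = fact N" using assms by (subst prod.delta) auto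
  finally show ?thesis .
qed

lemma len_filter_rep: "length (filter (\<lambda>y. y = k) (replicate n l)) = (if l = k then n else 0)"
  by (induct n) auto

lemma mode_list_filter:
  "length (filter (\<lambda>y. y = k) (mode_list M mu)) = (if k < M then mu k else 0)"
proof -
  have "length (filter (\<lambda>y. y = k) (mode_list M mu))
      = sum_list (map (\<lambda>l. if l = k then mu l else 0) [0..<M])"
    unfolding mode_list_def filter_concat length_concat map_map
    by (simp add: o_def len_filter_rep)
  also have "\<dots> = (\<Sum>l\<in>{0..<M}. if l = k then mu l else 0)"
    by (simp add: interv_sum_list_conv_sum_set_nat)
  also have "\<dots> = (if k < M then mu k else 0)" by (subst sum.delta) auto
  finally show ?thesis .
qed

lemma mode_list_length: "length (mode_list M mu) = (\<Sum>l<M. mu l)"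
proof -
  have "length (mode_list M mu) = sum_list (map (\<lambda>l. mu l) [0..<M])"
    unfolding mode_list_def length_concat map_map by (simp add: o_def)
  also have "\<dots> = (\<Sum>l<M. mu l)"
    by (simp add: interv_sum_list_conv_sum_set_nat lessThan_atLeast0)
  finally show ?thesis .
qed

lemma mode_list_set: "set (mode_list M mu) \<subseteq> {0..<M}"
  unfolding mode_list_def by auto

lemma Sm_nonempty:
  assumes mu: "mu \<in> fock N M"
  shows "Sm N M mu \<noteq> {}"
proof -
  define L where "L = mode_list M mu"
  have lenL: "length L = N" using mu by (simp add: L_def mode_list_length fock_def)
  define f where "f = (\<lambda>j. if j < N then L ! j else undefined)"
  have "f \<in> {0..<N} \<rightarrow>\<^sub>E {0..<M}"
  proof
    fix j assume "j \<in> {0..<N}"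
    then have "L ! j \<in> set L" using lenL by simp
    then have "L ! j \<in> {0..<M}" using mode_list_set[of M mu] unfolding L_def by blast
    then show "f j \<in> {0..<M}" using \<open>j \<in> {0..<N}\<close> by (simp add: f_def)
  next
    fix j assume "j \<notin> {0..<N}"
    then show "f j = undefined" by (simp add: f_def)
  qed
  moreover have "occ N f = mu"
  proof
    fix k
    have "occ N f k = card {j. j < length L \<and> L ! j = k}"
      unfolding occ_def lenL by (rule arg_cong[where f = card]) (auto simp: f_def)
    also have "\<dots> = length (filter (\<lambda>y. y = k) L)" by (simp add: length_filter_conv_card)
    also have "\<dots> = mu k" using mu by (auto simp: L_def mode_list_filter fock_def)
    finally show "occ N f k = mu k" .
  qed
  ultimately show ?thesis unfolding Sm_def by blast
qed

lemma Sm_finite: "finite (Sm N M mu)"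
proof -
  have "finite ({0..<N} \<rightarrow>\<^sub>E {0..<M})" by (intro finite_PiE) auto
  then show ?thesis unfolding Sm_def by simp
qed

lemma prod_occ:
  fixes h :: "nat \<Rightarrow> 'a::comm_monoid_mult"
  assumes f: "f \<in> Sm N M mu"
  shows "(\<Prod>j<N. h (f j)) = (\<Prod>l<M. h l ^ mu l)"
proof -
  have fi: "f ` {0..<N} \<subseteq> {0..<M}" using f by (auto simp: Sm_def)
  have "(\<Prod>j<N. h (f j)) = (\<Prod>l\<in>{0..<M}. \<Prod>j\<in>{j\<in>{0..<N}. f j = l}. h (f j))"
    unfolding lessThan_atLeast0 by (rule prod.group[symmetric]) (use fi in auto)
  also have "\<dots> = (\<Prod>l\<in>{0..<M}. h l ^ occ N f l)"
    by (rule prod.cong[OF refl]) (simp add: occ_def)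
  also have "\<dots> = (\<Prod>l<M. h l ^ mu l)" using f by (simp add: Sm_def lessThan_atLeast0)
  finally show ?thesis .
qed

lemma amp_e0:
  assumes M: "M \<ge> 1"
  shows "fock_amp N M g mu (e0 N) = Kc N M mu * (\<Prod>l<M. g l 0 ^ mu l)"
proof -
  have "(\<Sum>f\<in>Sm N M mu. \<Prod>j<N. g (f j) (mode_list M (e0 N) ! j))
      = (\<Sum>f\<in>Sm N M mu. \<Prod>l<M. g l 0 ^ mu l)"
  proof (rule sum.cong[OF refl])
    fix f assume f: "f \<in> Sm N M mu"
    have "(\<Prod>j<N. g (f j) (mode_list M (e0 N) ! j)) = (\<Prod>j<N. (\<lambda>l. g l 0) (f j))"
      by (rule prod.cong[OF refl]) (simp add: mode_list_e0[OF M])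
    also have "\<dots> = (\<Prod>l<M. g l 0 ^ mu l)" by (rule prod_occ[OF f])
    finally show "(\<Prod>j<N. g (f j) (mode_list M (e0 N) ! j)) = (\<Prod>l<M. g l 0 ^ mu l)" .
  qed
  then show ?thesis
    unfolding fock_amp_def Kc_def Sm_def[symmetric] fock_fact_e0[OF M]
    by (simp add: mult_ac)
qed

lemma Kc_nonzero:
  assumes "mu \<in> fock N M" shows "Kc N M mu \<noteq> 0"
proof -
  have "fock_fact M mu > 0" unfolding fock_fact_def by (intro prod_pos) auto
  moreover have "card (Sm N M mu) > 0" using Sm_nonempty[OF assms] Sm_finite card_gt_0_iff by blast
  ultimately show ?thesis by (simp add: Kc_def)
qed

lemma Kc_cnj: "cnj (Kc N M mu) = Kc N M mu"
  by (simp add: Kc_def)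




lemma sum_delta_mult:
  fixes f :: "nat \<Rightarrow> complex"
  assumes "i < M"
  shows "(\<Sum>k<M. (if k = i then 1 else 0) * f k) = f i"
proof -
  have "(\<Sum>k<M. (if k = i then 1 else 0) * f k) = (\<Sum>k<M. if k = i then f k else 0)"
    by (rule sum.cong) auto
  also have "\<dots> = f i" using assms by (subst sum.delta) auto
  finally show ?thesis .
qed

lemma householder:
  fixes y :: "nat \<Rightarrow> complex"
  assumes M: "M \<ge> 1" and n1: "(\<Sum>l<M. (cmod (y l))^2) = 1"
    and im: "Im (y 0) = 0" and re: "Re (y 0) < 0"
  shows "\<exists>g. unitary_mat M g \<and> (\<forall>l<M. g l 0 = y l)"
proof -
  define s where "s = 1 - Re (y 0)"
  have spos: "s > 0" using re by (simp add: s_def)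
  define d :: "nat \<Rightarrow> nat \<Rightarrow> complex" where "d k l = (if k = l then 1 else 0)" for k l
  define v where "v l = d l 0 - y l" for l
  define g where "g k l = d k l - v k * cnj (v l) / complex_of_real s" for k l
  have y0: "y 0 = complex_of_real (Re (y 0))" using im by (simp add: complex_eq_iff)
  have v0: "v 0 = complex_of_real s" unfolding v_def d_def s_def by (subst y0) simp
  have col: "g l 0 = y l" for l
    unfolding g_def v0 using spos by (simp add: v_def)
  have nv: "(\<Sum>k<M. cnj (v k) * v k) = 2 * complex_of_real s"
  proof -
    have "(\<Sum>k<M. cnj (v k) * v k)
        = (\<Sum>k<M. d k 0 * 1) - (\<Sum>k<M. d k 0 * y k) - (\<Sum>k<M. d k 0 * cnj (y k)) + (\<Sum>k<M. cnj (y k) * y k)"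
      unfolding sum_subtractf[symmetric] sum.distrib[symmetric]
      by (rule sum.cong) (auto simp: v_def d_def algebra_simps)
    also have "(\<Sum>k<M. cnj (y k) * y k) = complex_of_real (\<Sum>l<M. (cmod (y l))^2)"
      unfolding of_real_sum by (rule sum.cong[OF refl]) (subst complex_norm_square, simp add: mult.commute)
    also have "\<dots> = 1" using n1 by simp
    also have "(\<Sum>k<M. d k 0 * 1) = 1" using sum_delta_mult[of 0 M "\<lambda>_. 1"] M by (simp add: d_def)
    also have "(\<Sum>k<M. d k 0 * y k) = y 0" using sum_delta_mult[of 0 M y] M by (simp add: d_def)
    also have "(\<Sum>k<M. d k 0 * cnj (y k)) = cnj (y 0)" using sum_delta_mult[of 0 M "\<lambda>k. cnj (y k)"] M by (simp add: d_def)
    finally show ?thesis unfolding s_def by (subst (asm) y0) (simp add: complex_eq_iff)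
  qed
  have "unitary_mat M g"
    unfolding unitary_mat_def
  proof (intro allI impI)
    fix i j assume i: "i < M" and j: "j < M"
    have sc: "complex_of_real s \<noteq> 0" using spos by simp
    have "(\<Sum>k<M. cnj (g k i) * g k j)
        = (\<Sum>k<M. d k i * d k j) - (\<Sum>k<M. d k i * (v k * cnj (v j) / s))
          - (\<Sum>k<M. d k j * (cnj (v k) * v i / s))
          + (v i * cnj (v j) / (s * s)) * (\<Sum>k<M. cnj (v k) * v k)"
      unfolding sum_subtractf[symmetric] sum.distrib[symmetric] sum_distrib_left
    proof (rule sum.cong[OF refl])
      fix k
      have cd: "cnj (d a b) = d a b" for a b by (simp add: d_def)
      have "cnj (g k i) * g k j = (d k i - cnj (v k) * v i / s) * (d k j - v k * cnj (v j) / s)"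
        by (simp add: g_def cd)
      also have "\<dots> = d k i * d k j - d k i * (v k * cnj (v j) / s) - d k j * (cnj (v k) * v i / s)
          + v i * cnj (v j) / (s * s) * (cnj (v k) * v k)"
        using sc by (simp add: field_simps)
      finally show "cnj (g k i) * g k j = d k i * d k j - d k i * (v k * cnj (v j) / s) - d k j * (cnj (v k) * v i / s)
          + v i * cnj (v j) / (s * s) * (cnj (v k) * v k)" .
    qed
    also have "(\<Sum>k<M. d k i * d k j) = d i j" using sum_delta_mult[OF i, of "\<lambda>k. d k j"] by (simp add: d_def)
    also have "(\<Sum>k<M. d k i * (v k * cnj (v j) / s)) = v i * cnj (v j) / s"
      using sum_delta_mult[OF i, of "\<lambda>k. v k * cnj (v j) / s"] by (simp add: d_def)
    also have "(\<Sum>k<M. d k j * (cnj (v k) * v i / s)) = cnj (v j) * v i / s"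
      using sum_delta_mult[OF j, of "\<lambda>k. cnj (v k) * v i / s"] by (simp add: d_def)
    finally have "(\<Sum>k<M. cnj (g k i) * g k j) = d i j"
      unfolding nv using sc by (simp add: field_simps)
    then show "(\<Sum>k<M. cnj (g k i) * g k j) = (if i = j then 1 else 0)" by (simp add: d_def)
  qed
  then show ?thesis using col by blast
qed




definition Xm :: "nat \<Rightarrow> (nat \<Rightarrow> complex) \<Rightarrow> (nat \<Rightarrow> nat) \<Rightarrow> complex" where
  "Xm M x mu = (\<Prod>l<M. x l ^ mu l)"

definition Qf :: "nat \<Rightarrow> nat \<Rightarrow> ((nat \<Rightarrow> nat) \<Rightarrow> (nat \<Rightarrow> nat) \<Rightarrow> complex) \<Rightarrow> (nat \<Rightarrow> complex) \<Rightarrow> complex" where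
  "Qf N M D x = (\<Sum>mu\<in>fock N M. \<Sum>mu'\<in>fock N M.
      cnj (Kc N M mu * Xm M x mu) * D mu mu' * (Kc N M mu' * Xm M x mu'))"

lemma outcome_Qf:
  assumes "M \<ge> 1"
  shows "outcome_prob N M \<rho>1 g (e0 N) - outcome_prob N M \<rho>2 g (e0 N)
       = Qf N M (\<lambda>mu mu'. \<rho>1 mu mu' - \<rho>2 mu mu') (\<lambda>l. g l 0)"
  unfolding outcome_prob_def Qf_def amp_e0[OF assms] Xm_def sum_subtractf[symmetric]
  by (intro sum.cong refl) (simp add: algebra_simps)

lemma Xm_loc: "(\<forall>l<M. x l = x' l) \<Longrightarrow> Xm M x mu = Xm M x' mu"
  unfolding Xm_def by (intro prod.cong) auto

lemma Qf_loc: "(\<forall>l<M. x l = x' l) \<Longrightarrow> Qf N M D x = Qf N M D x'"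
  unfolding Qf_def using Xm_loc[of M x x'] by simp

lemma nsq: "z * cnj z = (complex_of_real (cmod z))^2"
  using complex_norm_square[of z] by (simp only: of_real_power)

lemma Xm_scale: assumes "mu \<in> fock N M" shows "Xm M (\<lambda>l. c * x l) mu = c ^ N * Xm M x mu"
proof -
  have "Xm M (\<lambda>l. c * x l) mu = (\<Prod>l<M. c ^ mu l) * Xm M x mu"
    unfolding Xm_def power_mult_distrib prod.distrib ..
  also have "(\<Prod>l<M. c ^ mu l) = c ^ (\<Sum>l<M. mu l)" by (rule power_sum[symmetric])
  also have "(\<Sum>l<M. mu l) = N" using assms by (simp add: fock_def)
  finally show ?thesis .
qed

lemma Qf_scale: "Qf N M D (\<lambda>l. c * x l) = complex_of_real (cmod c ^ 2) ^ N * Qf N M D x"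
proof -
  have cc: "c ^ N * cnj c ^ N = ((complex_of_real (cmod c))^2) ^ N"
    by (simp add: nsq power_mult_distrib[symmetric])
  show ?thesis
    unfolding Qf_def sum_distrib_left
    by (intro sum.cong refl) (simp add: Xm_scale algebra_simps cc)
qed

lemma Qf_zero:
  assumes M: "M \<ge> 1" and hyp: "\<forall>g. unitary_mat M g \<longrightarrow> Qf N M D (\<lambda>l. g l 0) = 0"
    and x0: "x 0 \<noteq> 0"
  shows "Qf N M D x = 0"
proof -
  define nx where "nx = sqrt (\<Sum>l<M. (cmod (x l))^2)"
  have "(cmod (x 0))^2 \<le> (\<Sum>l<M. (cmod (x l))^2)"
    using M by (intro member_le_sum) auto
  moreover have "(cmod (x 0))^2 > 0" using x0 by simp
  ultimately have sp: "(\<Sum>l<M. (cmod (x l))^2) > 0" by linarith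
  then have nxp: "nx > 0" by (simp add: nx_def)
  have nx2: "nx^2 = (\<Sum>l<M. (cmod (x l))^2)" using sp by (simp add: nx_def)
  define a where "a = cmod (x 0)"
  have ap: "a > 0" using x0 by (simp add: a_def)
  define c where "c = - cnj (x 0) / complex_of_real (a * nx)"
  define y where "y l = c * x l" for l
  have cm: "cmod c = 1 / nx" using ap nxp by (simp add: c_def a_def norm_divide norm_mult)
  have y0: "y 0 = - complex_of_real (a / nx)"
  proof -
    have "cnj (x 0) * x 0 = complex_of_real (a^2)"
      by (simp add: a_def nsq mult.commute)
    then show ?thesis using ap nxp unfolding y_def c_def
      by (simp add: field_simps power2_eq_square)
  qed
  have n1: "(\<Sum>l<M. (cmod (y l))^2) = 1"
  proof -
    have "(\<Sum>l<M. (cmod (y l))^2) = (cmod c)^2 * (\<Sum>l<M. (cmod (x l))^2)"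
      unfolding sum_distrib_left by (simp add: y_def norm_mult power_mult_distrib)
    also have "\<dots> = 1" using nxp unfolding cm nx2[symmetric] by (simp add: field_simps)
    finally show ?thesis .
  qed
  have im: "Im (y 0) = 0" using y0 by simp
  have re: "Re (y 0) < 0" using y0 ap nxp by simp
  obtain g where g: "unitary_mat M g" "\<forall>l<M. g l 0 = y l"
    using householder[OF M n1 im re] by blast
  have "Qf N M D y = 0" using hyp g Qf_loc[of M y "\<lambda>l. g l 0" N D] by simp
  moreover have "Qf N M D y = complex_of_real (cmod c ^ 2) ^ N * Qf N M D x"
    unfolding y_def by (rule Qf_scale)
  moreover have "cmod c \<noteq> 0" using cm nxp by simp
  ultimately show ?thesis by simp
qed




lemma polar:
  assumes N: "N \<ge> 1" and M: "M \<ge> 1"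
    and hyp: "\<forall>g. unitary_mat M g \<longrightarrow> Qf N M D (\<lambda>l. g l 0) = 0"
  shows "\<forall>mu\<in>fock N M. \<forall>mu'\<in>fock N M. D mu mu' = 0"
proof -
  define F where "F = fock N M"
  define B where "B = N + 1"
  define a where "a mu = (\<Sum>l<M. mu l * B ^ l)" for mu :: "nat \<Rightarrow> nat"
  define C where "C p = Kc N M (fst p) * Kc N M (snd p) * D (fst p) (snd p)" for p
  have finF: "finite F" unfolding F_def using M by (rule fock_finite)
  have Xk: "Xm M (\<lambda>l. z ^ (B ^ l)) mu = z ^ a mu" for z mu
  proof -
    have "Xm M (\<lambda>l. z ^ (B ^ l)) mu = (\<Prod>l<M. z ^ (mu l * B ^ l))"
      unfolding Xm_def by (intro prod.cong refl) (simp add: power_mult[symmetric] mult.commute)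
    also have "\<dots> = z ^ a mu" unfolding a_def by (rule power_sum[symmetric])
    finally show ?thesis .
  qed
  have hz: "(\<Sum>p\<in>F \<times> F. C p * cnj z ^ a (fst p) * z ^ a (snd p)) = 0" if z: "z \<noteq> 0" for z
  proof -
    have "Qf N M D (\<lambda>l. z ^ (B ^ l)) = 0"
      using Qf_zero[OF M hyp] z by simp
    moreover have "Qf N M D (\<lambda>l. z ^ (B ^ l)) = (\<Sum>p\<in>F \<times> F. C p * cnj z ^ a (fst p) * z ^ a (snd p))"
      unfolding Qf_def Xk F_def[symmetric] sum.cartesian_product
      by (intro sum.cong refl) (auto simp: C_def Kc_cnj mult_ac)
    ultimately show ?thesis by simp
  qed
  have inja: "mu1 = mu2" if "mu1 \<in> F" "mu2 \<in> F" "a mu1 = a mu2" for mu1 mu2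
  proof
    fix l
    have "\<forall>l<M. mu1 l = mu2 l"
    proof (rule digits_inj)
      show "\<forall>l. mu1 l < B" using fock_le[of mu1 N M] that(1) by (auto simp: F_def B_def less_Suc_eq_le)
      show "\<forall>l. mu2 l < B" using fock_le[of mu2 N M] that(2) by (auto simp: F_def B_def less_Suc_eq_le)
      show "(\<Sum>l<M. mu1 l * B ^ l) = (\<Sum>l<M. mu2 l * B ^ l)" using that(3) by (simp add: a_def)
    qed
    then show "mu1 l = mu2 l" using that(1,2) by (cases "l < M") (auto simp: F_def fock_def)
  qed
  have "\<forall>p\<in>F \<times> F. C p = 0"
  proof (rule onevar)
    show "finite (F \<times> F)" using finF by simp
    show "inj_on (\<lambda>p. (a (fst p), a (snd p))) (F \<times> F)"
      by (rule inj_onI) (auto intro: inja simp: prod_eq_iff)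
    show "\<forall>z. z \<noteq> 0 \<longrightarrow> (\<Sum>p\<in>F \<times> F. C p * cnj z ^ a (fst p) * z ^ a (snd p)) = 0"
      using hz by blast
  qed
  then show ?thesis
    using Kc_nonzero unfolding F_def C_def by fastforce
qed




lemma vs: "vector_space (\<lambda>(c::complex) (f::'i \<Rightarrow> complex) x. c * f x)"
  by unfold_locales (simp_all add: fun_eq_iff algebra_simps)

lemma sum_fun_apply: "(\<Sum>p\<in>A. f p) x = (\<Sum>p\<in>A. (f p x :: complex))"
proof (cases "finite A")
  case True
  then show ?thesis by (induct A rule: finite_induct) auto
next
  case False
  then show ?thesis by simp
qed

lemma fock1: "fock N 1 = {e0 N}"
proof
  show "fock N 1 \<subseteq> {e0 N}"
  proof
    fix mu assume mu: "mu \<in> fock N 1"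
    have "mu = e0 N"
    proof
      fix l show "mu l = e0 N l" using mu by (cases l) (auto simp: fock_def e0_def)
    qed
    then show "mu \<in> {e0 N}" by simp
  qed
  show "{e0 N} \<subseteq> fock N 1" using e0_fock[of 1 N] by simp
qed

lemma recon1: "reconstructs N 1 []"
  unfolding reconstructs_def
proof (intro allI impI)
  fix \<rho>1 \<rho>2 assume d1: "density_op N 1 \<rho>1" and d2: "density_op N 1 \<rho>2"
  have "(\<Sum>mu\<in>fock N 1. \<rho>1 mu mu) = 1" using d1 unfolding density_op_def by blast
  then have t1: "\<rho>1 (e0 N) (e0 N) = 1" unfolding fock1 by simp
  have "(\<Sum>mu\<in>fock N 1. \<rho>2 mu mu) = 1" using d2 unfolding density_op_def by blast
  then have t2: "\<rho>2 (e0 N) (e0 N) = 1" unfolding fock1 by simp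
  show "\<rho>1 = \<rho>2"
  proof (intro ext)
    fix mu mu'
    show "\<rho>1 mu mu' = \<rho>2 mu mu'"
    proof (cases "mu \<in> fock N 1 \<and> mu' \<in> fock N 1")
      case True
      then have "mu = e0 N" "mu' = e0 N" unfolding fock1 by auto
      then show ?thesis using t1 t2 by simp
    next
      case False
      have "\<rho>1 mu mu' = 0" using d1 False unfolding density_op_def by blast
      moreover have "\<rho>2 mu mu' = 0" using d2 False unfolding density_op_def by blast
      ultimately show ?thesis by simp
    qed
  qed
qed

lemma main_M2:
  fixes N M :: nat
  assumes N: "N \<ge> 1" and M2: "M \<ge> 2"
  shows "\<exists>gs :: (nat \<Rightarrow> nat \<Rightarrow> complex) list.
           (\<forall>g\<in>set gs. unitary_mat M g) \<and>
           length gs < ((N + M^2 - 1) choose N)^2 \<and>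
           reconstructs N M gs"
proof -
  have M: "M \<ge> 1" using M2 by simp
  interpret V: vector_space "\<lambda>(c::complex) (f::((nat\<Rightarrow>nat)\<times>(nat\<Rightarrow>nat)) \<Rightarrow> complex) x. c * f x"
    by (rule vs)
  define F where "F = fock N M"
  define P where "P = F \<times> F"
  have finF: "finite F" unfolding F_def using M by (rule fock_finite)
  have finP: "finite P" unfolding P_def using finF by simp
  define A where "A g mu = fock_amp N M g mu (e0 N)" for g mu
  define wv where "wv g = (\<lambda>p. if p \<in> P then cnj (A g (fst p)) * A g (snd p) else 0)" for g
  define W where "W = wv ` {g. unitary_mat M g}"
  obtain Bs where Bs0: "{} \<subseteq> Bs" and Bs: "Bs \<subseteq> W" "V.independent Bs" "W \<subseteq> V.span Bs"
    by (rule V.maximal_independent_subset_extend[OF empty_subsetI V.independent_empty])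
  define dl where "dl p = (\<lambda>q. if q = p then 1 else (0::complex))" for p :: "(nat\<Rightarrow>nat)\<times>(nat\<Rightarrow>nat)"
  define E where "E = dl ` P"
  have WE: "W \<subseteq> V.span E"
  proof
    fix w assume "w \<in> W"
    then obtain g where w: "w = wv g" unfolding W_def by blast
    have eq: "w = (\<Sum>p\<in>P. (\<lambda>x. w p * dl p x))"
    proof
      fix q
      have "(\<Sum>p\<in>P. (\<lambda>x. w p * dl p x)) q = (\<Sum>p\<in>P. w p * dl p q)" by (rule sum_fun_apply)
      also have "\<dots> = (\<Sum>p\<in>P. if p = q then w p else 0)"
        by (rule sum.cong) (auto simp: dl_def)
      also have "\<dots> = (if q \<in> P then w q else 0)" using finP by (simp add: sum.delta)
      also have "\<dots> = w q" by (simp add: w wv_def)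
      finally show "w q = (\<Sum>p\<in>P. (\<lambda>x. w p * dl p x)) q" by simp
    qed
    have "(\<Sum>p\<in>P. (\<lambda>x. w p * dl p x)) \<in> V.span E"
      by (intro V.span_sum V.span_scale V.span_base) (auto simp: E_def)
    then show "w \<in> V.span E" using eq by simp
  qed
  have finE: "finite E" unfolding E_def using finP by simp
  have "finite Bs \<and> card Bs \<le> card E"
    using V.independent_span_bound[OF finE Bs(2)] Bs(1) WE by blast
  then have finB: "finite Bs" and cardB: "card Bs \<le> card E" by auto
  have cardE: "card E \<le> card F ^ 2" unfolding E_def
    using card_image_le[OF finP, of dl] by (simp add: P_def card_cartesian_product power2_eq_square)
  obtain bs where bs: "set bs = Bs" "distinct bs" using finite_distinct_list[OF finB] by blast
  define sel where "sel b = (SOME g. unitary_mat M g \<and> wv g = b)" for b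
  have sel: "unitary_mat M (sel b) \<and> wv (sel b) = b" if "b \<in> Bs" for b
  proof -
    have "\<exists>g. unitary_mat M g \<and> wv g = b" using that Bs(1) unfolding W_def by blast
    then show ?thesis unfolding sel_def by (rule someI_ex)
  qed
  define gs where "gs = map sel bs"
  have U: "\<forall>g\<in>set gs. unitary_mat M g" using sel bs(1) by (auto simp: gs_def)
  have "length gs = card Bs" using distinct_card[OF bs(2)] bs(1) by (simp add: gs_def)
  also have "\<dots> \<le> card F ^ 2" using cardB cardE by simp
  also have "\<dots> < ((N + M^2 - 1) choose N)^2"
    using fock_card_less[OF M2 N] unfolding F_def by (intro power_strict_mono) auto
  finally have L: "length gs < ((N + M^2 - 1) choose N)^2" .
  have R: "reconstructs N M gs"
    unfolding reconstructs_def
  proof (intro allI impI)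
    fix \<rho>1 \<rho>2
    assume d1: "density_op N M \<rho>1" and d2: "density_op N M \<rho>2"
      and eqs: "\<forall>j<length gs. \<forall>nu\<in>fock N M. outcome_prob N M \<rho>1 (gs ! j) nu = outcome_prob N M \<rho>2 (gs ! j) nu"
    have e0F: "e0 N \<in> F" unfolding F_def using M by (rule e0_fock)
    have eqg: "outcome_prob N M \<rho>1 g (e0 N) = outcome_prob N M \<rho>2 g (e0 N)" if "g \<in> set gs" for g
      using that eqs e0F unfolding F_def by (auto simp: in_set_conv_nth)
    define Lf where "Lf w = (\<Sum>p\<in>P. w p * (\<rho>1 (fst p) (snd p) - \<rho>2 (fst p) (snd p)))" for w
    have LW: "Lf (wv g) = outcome_prob N M \<rho>1 g (e0 N) - outcome_prob N M \<rho>2 g (e0 N)" for g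
      unfolding Lf_def outcome_prob_def wv_def A_def P_def F_def[symmetric] sum_subtractf[symmetric]
        sum.cartesian_product
      by (intro sum.cong refl) (auto simp: algebra_simps)
    have Ladd: "Lf (w1 + w2) = Lf w1 + Lf w2" for w1 w2
      unfolding Lf_def by (simp add: distrib_right sum.distrib)
    have Lsc: "Lf (\<lambda>x. c * w x) = c * Lf w" for c w
      unfolding Lf_def by (simp add: sum_distrib_left mult.assoc)
    have L0: "Lf 0 = 0" unfolding Lf_def by simp
    have sub: "V.subspace {w. Lf w = 0}"
      unfolding V.subspace_def by (auto simp: Ladd Lsc L0)
    have "Bs \<subseteq> {w. Lf w = 0}"
    proof
      fix b assume b: "b \<in> Bs"
      then have "sel b \<in> set gs" using bs(1) by (simp add: gs_def)
      then have "Lf (wv (sel b)) = 0" using LW eqg by simp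
      then show "b \<in> {w. Lf w = 0}" using sel[OF b] by simp
    qed
    then have "V.span Bs \<subseteq> {w. Lf w = 0}" using sub by (rule V.span_minimal)
    then have WL: "W \<subseteq> {w. Lf w = 0}" using Bs(3) by blast
    have "\<forall>g. unitary_mat M g \<longrightarrow> Qf N M (\<lambda>mu mu'. \<rho>1 mu mu' - \<rho>2 mu mu') (\<lambda>l. g l 0) = 0"
    proof (intro allI impI)
      fix g assume "unitary_mat M g"
      then have "wv g \<in> W" unfolding W_def by blast
      then have L0g: "Lf (wv g) = 0" using WL by blast
      have "Qf N M (\<lambda>mu mu'. \<rho>1 mu mu' - \<rho>2 mu mu') (\<lambda>l. g l 0)
          = outcome_prob N M \<rho>1 g (e0 N) - outcome_prob N M \<rho>2 g (e0 N)"
        by (rule outcome_Qf[OF M, symmetric])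
      also have "\<dots> = Lf (wv g)" by (rule LW[symmetric])
      finally show "Qf N M (\<lambda>mu mu'. \<rho>1 mu mu' - \<rho>2 mu mu') (\<lambda>l. g l 0) = 0" using L0g by simp
    qed
    then have zero: "\<forall>mu\<in>fock N M. \<forall>mu'\<in>fock N M. \<rho>1 mu mu' - \<rho>2 mu mu' = 0"
      by (rule polar[OF N M])
    show "\<rho>1 = \<rho>2"
    proof (intro ext)
      fix mu mu'
      show "\<rho>1 mu mu' = \<rho>2 mu mu'"
      proof (cases "mu \<in> fock N M \<and> mu' \<in> fock N M")
        case True
        then show ?thesis using zero by simp
      next
        case False
        have "\<rho>1 mu mu' = 0" using d1 False unfolding density_op_def by blast
        moreover have "\<rho>2 mu mu' = 0" using d2 False unfolding density_op_def by blast
        ultimately show ?thesis by simp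
      qed
    qed
  qed
  show ?thesis using U L R by blast
qed

theorem theorem1:
  fixes N M :: nat
  assumes "N \<ge> 1" and "M \<ge> 1"
  shows "\<exists>gs :: (nat \<Rightarrow> nat \<Rightarrow> complex) list.
           (\<forall>g\<in>set gs. unitary_mat M g) \<and>
           length gs < ((N + M^2 - 1) choose N)^2 \<and>
           reconstructs N M gs"
proof (cases "M = 1")
  case True
  have "((N + M^2 - 1) choose N)^2 > 0" using True by simp
  then show ?thesis using recon1[of N] True by (intro exI[of _ "[]"]) auto
next
  case False
  then show ?thesis using main_M2[OF assms(1)] assms(2) by simp
qed


end
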